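(* Let $p$ be an odd prime, let $d>1$ be an integer, and let $q$ be an even power of $p$ with $q \equiv 1 \pmod{2d}$. Let $\chi$ be a multiplicative character of $\mathbb{F}_q$ of order $d$. Let $A \subseteq \mathbb{F}_q$ with $|A|=\sqrt{q}$, and for $c \in \mathbb{F}_q^*$ let $S(c)=\sum_{a \in A} e_p\big(\operatorname{Tr}(ac)\big)$. Then $A$ is a maximum clique in $GP(q,d)$ if and only if for every $c \in \mathbb{F}_q^*$ the complex numbers $\chi(c)|S(c)|^2$ and $G(\chi)$ share the same argument. In particular, if $\omega\big(GP(q,d)\big)=\sqrt{q}$, then $\epsilon(\chi)$ is a $d$-th root of unity, the Gauss sum $G(\chi)=\epsilon(\chi)\sqrt{q}$ is pure, and $S(c)=0$ for every $c \in \mathbb{F}_q^*$ with $\chi(c) \neq \epsilon(\chi)$.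
   Context: $GP(q,d)$ is the graph on $\mathbb{F}_q$ in which distinct $x,y$ are adjacent iff $x-y$ is a $d$-th power in $\mathbb{F}_q^*$; $\omega$ denotes clique number. $\operatorname{Tr}$ is the absolute trace $\mathbb{F}_q \to \mathbb{F}_p$, $\operatorname{Tr}(\alpha)=\alpha+\alpha^p+\dots+\alpha^{q/p}$, and $e_p(x)=e^{2\pi i x/p}$ for $x\in\mathbb{F}_p$ (identified with $\{0,\dots,p-1\}$). Multiplicative characters are extended by $\chi(0)=0$. The Gauss sum is $G(\chi)=\sum_{c \in \mathbb{F}_q}\chi(c)e_p(\operatorname{Tr}(c))$, and for nontrivial $\chi$ the normalized Gauss sum is $\epsilon(\chi)=q^{-1/2}G(\chi)$. A Gauss sum is pure if some nonzero integral power of it is a real number. The number $0$ is regarded as sharing the argument of any complex number. *)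

theory Defs
  imports "HOL-Analysis.Analysis" "HOL-Computational_Algebra.Primes"
begin

definition ff_degree :: "'a::{finite,field} itself \<Rightarrow> nat" where
  "ff_degree _ = (THE n. CARD('a) = CHAR('a) ^ n)"

definition abs_trace :: "'a::{finite,field} \<Rightarrow> 'a" where
  "abs_trace x = (\<Sum>i < ff_degree TYPE('a). x ^ (CHAR('a) ^ i))"

definition prime_field_rep :: "'a::{finite,field} \<Rightarrow> nat" where
  "prime_field_rep t = (THE k. k < CHAR('a) \<and> of_nat k = t)"

definition e_p :: "'a::{finite,field} \<Rightarrow> complex" where
  "e_p t = cis (2 * pi * real (prime_field_rep t) / real CHAR('a))"

definition mult_char :: "('a::{finite,field} \<Rightarrow> complex) \<Rightarrow> bool" where
  "mult_char chi \<longleftrightarrow> chi 0 = 0 \<and> chi 1 = 1 \<and>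
     (\<forall>x y. x \<noteq> 0 \<longrightarrow> y \<noteq> 0 \<longrightarrow> chi (x * y) = chi x * chi y)"

definition char_order :: "('a::{finite,field} \<Rightarrow> complex) \<Rightarrow> nat \<Rightarrow> bool" where
  "char_order chi d \<longleftrightarrow> d > 0 \<and> (\<forall>x. x \<noteq> 0 \<longrightarrow> chi x ^ d = 1) \<and>
     (\<forall>k. 0 < k \<and> k < d \<longrightarrow> (\<exists>x. x \<noteq> 0 \<and> chi x ^ k \<noteq> 1))"

definition gauss_sum :: "('a::{finite,field} \<Rightarrow> complex) \<Rightarrow> complex" where
  "gauss_sum chi = (\<Sum>c\<in>UNIV. chi c * e_p (abs_trace c))"

definition norm_gauss_sum :: "('a::{finite,field} \<Rightarrow> complex) \<Rightarrow> complex" where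
  "norm_gauss_sum chi = gauss_sum chi / complex_of_real (sqrt (real CARD('a)))"

definition pure :: "complex \<Rightarrow> bool" where
  "pure z \<longleftrightarrow> (\<exists>n::int. n \<noteq> 0 \<and> z powi n \<in> \<real>)"

text \<open>Same argument; 0 shares the argument of every complex number.\<close>
definition same_arg :: "complex \<Rightarrow> complex \<Rightarrow> bool" where
  "same_arg z w \<longleftrightarrow> z = 0 \<or> w = 0 \<or> (\<exists>r::real. r > 0 \<and> z = of_real r * w)"

definition gp_adj :: "nat \<Rightarrow> 'a::{finite,field} \<Rightarrow> 'a \<Rightarrow> bool" where
  "gp_adj d x y \<longleftrightarrow> x \<noteq> y \<and> (\<exists>z. z \<noteq> 0 \<and> x - y = z ^ d)"

definition gp_clique :: "nat \<Rightarrow> 'a::{finite,field} set \<Rightarrow> bool" where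
  "gp_clique d A \<longleftrightarrow> (\<forall>x\<in>A. \<forall>y\<in>A. x \<noteq> y \<longrightarrow> gp_adj d x y)"

definition gp_clique_number :: "'a::{finite,field} itself \<Rightarrow> nat \<Rightarrow> nat" where
  "gp_clique_number _ d = Max {card (A :: 'a set) | A. gp_clique d A}"

definition gp_max_clique :: "nat \<Rightarrow> 'a::{finite,field} set \<Rightarrow> bool" where
  "gp_max_clique d A \<longleftrightarrow> gp_clique d A \<and> card A = gp_clique_number TYPE('a) d"

end

theory Submission
  imports Defs "HOL-Computational_Algebra.Polynomial"
begin

lemma ff_char_prime: "prime CHAR('a::{finite,field})"
  by (intro prime_CHAR_semidom finite_imp_CHAR_pos) simp

lemma ff_power_card: "(x::'a::{finite,field}) ^ CARD('a) = x"
proof (cases "x = 0")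
  case False
  have "x * (\<Prod>y\<in>UNIV-{0}. x * y) = x * x ^ (card (UNIV :: 'a set) - 1) * \<Prod>(UNIV-{0})"
    by (simp add: prod.distrib mult_ac)
  also have "x * x ^ (card (UNIV :: 'a set) - 1) = x ^ Suc (card (UNIV :: 'a set) - 1)"
    by (subst power_Suc) auto
  also have "Suc (card (UNIV :: 'a set) - 1) = card (UNIV :: 'a set)"
    using finite_UNIV_card_ge_0[where ?'a = 'a] by simp
  also have "(\<Prod>y\<in>UNIV-{0}. x * y) = (\<Prod>y\<in>UNIV-{0}. y)"
    by (rule prod.reindex_bij_witness[of _ "\<lambda>y. y / x" "\<lambda>y. x * y"]) (use False in auto)
  finally show ?thesis
    by simp
qed (use finite_UNIV_card_ge_0[where ?'a = 'a] in auto)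

lemma ff_card_ge2: "CARD('a::{finite,field}) \<ge> 2"
proof -
  have "{0, 1::'a} \<subseteq> UNIV" by simp
  hence "card {0,1::'a} \<le> CARD('a)" by (intro card_mono) auto
  thus ?thesis by simp
qed

lemma ff_degree_eq:
  assumes "CARD('a::{finite,field}) = CHAR('a) ^ k"
  shows "ff_degree TYPE('a) = k"
proof -
  have p2: "CHAR('a) \<ge> 2" using ff_char_prime[where 'a='a] prime_ge_2_nat by blast
  show ?thesis unfolding ff_degree_def
  proof (rule the_equality)
    show "CARD('a) = CHAR('a) ^ k" by fact
    fix n assume "CARD('a) = CHAR('a) ^ n"
    with assms have "CHAR('a) ^ n = CHAR('a) ^ k" by simp
    with p2 show "n = k" using power_inject_exp by (metis Suc_1 Suc_le_lessD)
  qed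
qed

lemma ff_degree_pos:
  assumes "CARD('a::{finite,field}) = CHAR('a) ^ k"
  shows "k > 0"
  using assms ff_card_ge2[where 'a='a] by (cases k) auto

lemma tr_add:
  assumes "CARD('a::{finite,field}) = CHAR('a) ^ k"
  shows "abs_trace ((x::'a) + y) = abs_trace x + abs_trace y"
  unfolding abs_trace_def
  by (simp add: freshmans_dream'[OF ff_char_prime] sum.distrib)

lemma tr_zero:
  assumes "CARD('a::{finite,field}) = CHAR('a) ^ k"
  shows "abs_trace (0::'a) = 0"
proof -
  have "CHAR('a) ^ i \<noteq> 0" for i using prime_gt_0_nat[OF ff_char_prime[where 'a='a]] by simp
  then show ?thesis unfolding abs_trace_def by (intro sum.neutral) (simp add: power_0_left)
qed

lemma tr_pow_char:
  assumes "CARD('a::{finite,field}) = CHAR('a) ^ k"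
  shows "abs_trace (x::'a) ^ CHAR('a) = abs_trace x"
proof -
  let ?p = "CHAR('a)"
  have kd: "ff_degree TYPE('a) = k" by (rule ff_degree_eq[OF assms])
  have "abs_trace x ^ ?p = (\<Sum>i<k. (x ^ (?p ^ i)) ^ ?p)"
    unfolding abs_trace_def kd by (rule freshmans_dream_sum[OF ff_char_prime refl])
  also have "\<dots> = (\<Sum>i<k. x ^ (?p ^ Suc i))"
    by (simp add: power_mult[symmetric] mult.commute)
  also have "\<dots> = (\<Sum>i<Suc k. x ^ (?p ^ i)) - x"
    by (subst sum.lessThan_Suc_shift) simp
  also have "\<dots> = (\<Sum>i<k. x ^ (?p ^ i))"
    using ff_power_card[of x] assms by simp
  finally show ?thesis unfolding abs_trace_def kd .
qed

lemma of_nat_pow_char: "(of_nat j :: 'a::{finite,field}) ^ CHAR('a) = of_nat j"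
proof (induction j)
  case 0
  then show ?case using prime_gt_0_nat[OF ff_char_prime[where 'a='a]] by simp
next
  case (Suc j)
  have "(of_nat (Suc j) :: 'a) ^ CHAR('a) = (1 + of_nat j) ^ CHAR('a)" by simp
  also have "\<dots> = 1 ^ CHAR('a) + (of_nat j) ^ CHAR('a)"
    by (rule freshmans_dream[OF ff_char_prime refl])
  finally show ?case using Suc by simp
qed

lemma of_nat_inj_char:
  assumes "a < CHAR('a::{finite,field})" "b < CHAR('a)" "(of_nat a :: 'a) = of_nat b"
  shows "a = b"
proof (rule ccontr)
  assume ne: "a \<noteq> b"
  show False
  proof (cases "a < b")
    case True
    then have "CHAR('a) dvd (b - a)" using of_nat_eq_iff_char_dvd[of a b, where 'a='a] assms(3) by simp
    then show False using True assms(2) by (meson diff_less_Suc dvd_imp_le less_Suc_eq_le not_le zero_less_diff diff_le_self le_less_trans)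
  next
    case False
    then have "b < a" using ne by simp
    then have "CHAR('a) dvd (a - b)" using of_nat_eq_iff_char_dvd[of b a, where 'a='a] assms(3) by simp
    then show False using \<open>b < a\<close> assms(1) by (meson dvd_imp_le not_le zero_less_diff diff_le_self le_less_trans)
  qed
qed

lemma prime_field_elem:
  assumes "(t::'a::{finite,field}) ^ CHAR('a) = t"
  shows "\<exists>j<CHAR('a). t = of_nat j"
proof -
  let ?p = "CHAR('a)"
  have p2: "?p \<ge> 2" using ff_char_prime[where 'a='a] prime_ge_2_nat by blast
  define P :: "'a poly" where "P = monom 1 ?p - monom 1 1"
  have polyP: "poly P x = x ^ ?p - x" for x by (simp add: P_def poly_monom)
  have "coeff P ?p = 1" using p2 by (simp add: P_def coeff_monom)
  hence P0: "P \<noteq> 0" by auto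
  have "degree P \<le> max (degree (monom (1::'a) ?p)) (degree (monom (1::'a) 1))"
    unfolding P_def by (rule degree_diff_le_max)
  also have "\<dots> \<le> ?p" using p2 degree_monom_le[of "1::'a" ?p] degree_monom_le[of "1::'a" 1] by simp
  finally have degP: "degree P \<le> ?p" .
  define R where "R = {x. poly P x = 0}"
  have cardR: "card R \<le> ?p" using card_poly_roots_bound[OF P0] degP unfolding R_def by simp
  have sub: "(of_nat :: nat \<Rightarrow> 'a) ` {..<?p} \<subseteq> R"
    unfolding R_def polyP using of_nat_pow_char by auto
  have inj: "inj_on (of_nat :: nat \<Rightarrow> 'a) {..<?p}"
    by (auto simp: inj_on_def intro: of_nat_inj_char)
  have "card ((of_nat :: nat \<Rightarrow> 'a) ` {..<?p}) = ?p"
    using card_image[OF inj] by simp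
  hence eq: "(of_nat :: nat \<Rightarrow> 'a) ` {..<?p} = R"
    using card_subset_eq[OF _ sub] cardR by (metis finite le_antisym card_mono sub)
  have "t \<in> R" unfolding R_def polyP using assms by simp
  then show ?thesis unfolding eq[symmetric] by auto
qed

lemma rep_of_nat:
  assumes "j < CHAR('a::{finite,field})"
  shows "prime_field_rep (of_nat j :: 'a) = j"
  unfolding prime_field_rep_def
  by (rule the_equality) (use assms of_nat_inj_char in auto)

lemma of_nat_mod_char: "(of_nat (n mod CHAR('a)) :: 'a::{finite,field}) = of_nat n"
proof -
  have "(of_nat n :: 'a) = of_nat (n mod CHAR('a) + CHAR('a) * (n div CHAR('a)))" by simp
  also have "\<dots> = of_nat (n mod CHAR('a))" by (simp only: of_nat_add of_nat_mult of_nat_CHAR) simp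
  finally show ?thesis by simp
qed

lemma cis_mod:
  assumes "p > 0"
  shows "cis (2 * pi * real (n mod p) / real p) = cis (2 * pi * real n / real p)"
proof -
  have "real n = real (n mod p) + real p * real (n div p)"
    by (metis mod_mult_div_eq of_nat_add of_nat_mult add.commute)
  hence "2 * pi * real n / real p = 2 * pi * real (n mod p) / real p + 2 * pi * real (n div p)"
    using assms by (simp add: field_simps)
  hence "cis (2 * pi * real n / real p) = cis (2 * pi * real (n mod p) / real p) * cis (2 * pi * real (n div p))"
    by (simp only: cis_mult)
  also have "cis (2 * pi * real (n div p)) = 1"
    by (rule cis_multiple_2pi) simp
  finally show ?thesis by simp
qed

lemma ep_add:
  assumes "a < CHAR('a::{finite,field})" "b < CHAR('a)"
  shows "e_p (of_nat a + of_nat b :: 'a) = e_p (of_nat a :: 'a) * e_p (of_nat b :: 'a)"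
proof -
  let ?p = "CHAR('a)"
  have pp: "?p > 0" using prime_gt_0_nat[OF ff_char_prime[where 'a='a]] .
  have "(of_nat a + of_nat b :: 'a) = of_nat ((a + b) mod ?p)"
    by (simp add: of_nat_mod_char)
  hence "e_p (of_nat a + of_nat b :: 'a) = cis (2 * pi * real ((a + b) mod ?p) / real ?p)"
    unfolding e_p_def using rep_of_nat[of "(a+b) mod ?p", where 'a='a] pp by simp
  also have "\<dots> = cis (2 * pi * real (a + b) / real ?p)" by (rule cis_mod[OF pp])
  also have "\<dots> = cis (2 * pi * real a / real ?p) * cis (2 * pi * real b / real ?p)"
    by (simp add: cis_mult add_divide_distrib distrib_left)
  finally show ?thesis unfolding e_p_def using rep_of_nat[where 'a='a] assms by simp
qed

definition addch :: "'a::{finite,field} \<Rightarrow> complex" where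
  "addch x = e_p (abs_trace x)"

lemma tr_rep:
  assumes "CARD('a::{finite,field}) = CHAR('a) ^ k"
  shows "\<exists>j<CHAR('a). abs_trace (x::'a) = of_nat j"
  using prime_field_elem tr_pow_char[OF assms] by blast

lemma addch_add:
  assumes "CARD('a::{finite,field}) = CHAR('a) ^ k"
  shows "addch ((x::'a) + y) = addch x * addch y"
proof -
  obtain a where a: "a < CHAR('a)" "abs_trace x = of_nat a" using tr_rep[OF assms] by blast
  obtain b where b: "b < CHAR('a)" "abs_trace y = of_nat b" using tr_rep[OF assms] by blast
  show ?thesis unfolding addch_def tr_add[OF assms] a b by (rule ep_add[OF a(1) b(1)])
qed

lemma ep_zero: "e_p (0::'a::{finite,field}) = 1"
proof -
  have "prime_field_rep (of_nat 0 :: 'a) = 0"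
    by (rule rep_of_nat) (use prime_gt_0_nat[OF ff_char_prime[where 'a='a]] in simp)
  then show ?thesis unfolding e_p_def by simp
qed

lemma addch_zero:
  assumes "CARD('a::{finite,field}) = CHAR('a) ^ k"
  shows "addch (0::'a) = 1"
  unfolding addch_def tr_zero[OF assms] ep_zero ..

lemma norm_psi: "cmod (addch x) = 1"
  unfolding addch_def e_p_def by simp

lemma addch_neg:
  assumes "CARD('a::{finite,field}) = CHAR('a) ^ k"
  shows "addch (-(x::'a)) = cnj (addch x)"
proof -
  have "addch (-x) * addch x = 1" using addch_add[OF assms, of "-x" x] addch_zero[OF assms] by simp
  moreover have "addch x * cnj (addch x) = 1"
    using norm_psi[of x] complex_norm_square[of "addch x"] by (simp add: complex_mult_cnj)
  ultimately have "addch (-x) = addch (-x) * (addch x * cnj (addch x))" by simp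
  also have "\<dots> = cnj (addch x)" using \<open>addch (-x) * addch x = 1\<close> by (simp add: mult.assoc[symmetric])
  finally show ?thesis .
qed

lemma tr_nonzero_exists:
  assumes "CARD('a::{finite,field}) = CHAR('a) ^ k"
  shows "\<exists>x::'a. abs_trace x \<noteq> 0"
proof (rule ccontr)
  assume "\<not> ?thesis"
  hence all0: "\<forall>x::'a. abs_trace x = 0" by simp
  let ?p = "CHAR('a)"
  have p2: "?p \<ge> 2" using ff_char_prime[where 'a='a] prime_ge_2_nat by blast
  have kp: "k > 0" by (rule ff_degree_pos[OF assms])
  have kd: "ff_degree TYPE('a) = k" by (rule ff_degree_eq[OF assms])
  define T :: "'a poly" where "T = (\<Sum>i<k. monom 1 (?p ^ i))"
  have polyT: "poly T x = abs_trace x" for x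
    unfolding T_def abs_trace_def kd by (simp add: poly_sum poly_monom)
  have pw: "(?p ^ i = 1) \<longleftrightarrow> i = 0" for i using p2 by simp
  have "coeff T 1 = (\<Sum>i<k. if i = 0 then 1 else 0)"
    unfolding T_def coeff_sum coeff_monom by (intro sum.cong) (use pw in auto)
  also have "\<dots> = 1" using kp by (simp add: sum.delta)
  finally have "T \<noteq> 0" by auto
  have degT: "degree T \<le> ?p ^ (k - 1)"
    unfolding T_def
  proof (rule degree_sum_le)
    fix i assume "i \<in> {..<k}"
    hence "?p ^ i \<le> ?p ^ (k - 1)" using p2 by (intro power_increasing) auto
    then show "degree (monom (1::'a) (?p ^ i)) \<le> ?p ^ (k - 1)"
      using degree_monom_le order_trans by blast
  qed simp
  have "{x. poly T x = 0} = UNIV" using all0 polyT by auto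
  hence "CARD('a) \<le> ?p ^ (k - 1)"
    using card_poly_roots_bound[OF \<open>T \<noteq> 0\<close>] degT by simp
  moreover have "?p ^ (k - 1) < ?p ^ k" using p2 kp by (intro power_strict_increasing) auto
  ultimately show False using assms by simp
qed

lemma addch_nontriv:
  assumes "CARD('a::{finite,field}) = CHAR('a) ^ k"
  shows "\<exists>x::'a. addch x \<noteq> 1"
proof -
  let ?p = "CHAR('a)"
  have pp: "?p > 0" using prime_gt_0_nat[OF ff_char_prime[where 'a='a]] .
  obtain x :: 'a where x: "abs_trace x \<noteq> 0" using tr_nonzero_exists[OF assms] by blast
  obtain j where j: "j < ?p" "abs_trace x = of_nat j" using tr_rep[OF assms] by blast
  have j0: "j \<noteq> 0" using x j(2) by (metis of_nat_0)
  have "addch x = cis (2 * pi * real j / real ?p)"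
    unfolding addch_def e_p_def j(2) rep_of_nat[OF j(1)] ..
  moreover have "cis (2 * pi * real j / real ?p) \<noteq> 1"
  proof
    assume "cis (2 * pi * real j / real ?p) = 1"
    hence "cos (2 * pi * real j / real ?p) = 1" by (metis cis.sel(1) one_complex.sel(1))
    then obtain n :: int where n: "2 * pi * real j / real ?p = of_int n * 2 * pi"
      using cos_one_2pi_int by blast
    hence "real j = of_int n * real ?p" using pp by (simp add: field_simps)
    hence "int j = n * int ?p" by (metis of_int_eq_iff of_int_mult of_int_of_nat_eq)
    moreover have "0 < int j" "int j < int ?p" using j j0 by auto
    ultimately show False
    proof (cases "n \<le> 0")
      case True
      then have "n * int ?p \<le> 0" by (simp add: mult_nonpos_nonneg)
      then show False using \<open>int j = n * int ?p\<close> \<open>0 < int j\<close> by linarith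
    next
      case False
      then have "1 * int ?p \<le> n * int ?p" by (intro mult_right_mono) auto
      then show False using \<open>int j = n * int ?p\<close> \<open>int j < int ?p\<close> by linarith
    qed
  qed
  ultimately have "addch x \<noteq> 1" by simp
  then show ?thesis by blast
qed

lemma addch_sum:
  assumes "CARD('a::{finite,field}) = CHAR('a) ^ k"
  shows "(\<Sum>x\<in>UNIV. addch ((t::'a) * x)) = (if t = 0 then of_nat CARD('a) else 0)"
proof (cases "t = 0")
  case True
  then show ?thesis using addch_zero[OF assms] by simp
next
  case False
  have "(\<Sum>x\<in>UNIV. addch (t * x)) = (\<Sum>y\<in>UNIV. addch (y::'a))"
    by (rule sum.reindex_bij_witness[of _ "\<lambda>y. y / t" "\<lambda>x. t * x"]) (use False in auto)
  also have "\<dots> = 0"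
  proof -
    obtain x0 :: 'a where x0: "addch x0 \<noteq> 1" using addch_nontriv[OF assms] by blast
    have "(\<Sum>y\<in>UNIV. addch (y::'a)) = (\<Sum>y\<in>UNIV. addch (y + x0))"
      by (rule sum.reindex_bij_witness[of _ "\<lambda>y. y + x0" "\<lambda>y. y - x0"]) auto
    also have "\<dots> = addch x0 * (\<Sum>y\<in>UNIV. addch (y::'a))"
      by (simp add: addch_add[OF assms] sum_distrib_left mult.commute)
    finally have "(1 - addch x0) * (\<Sum>y\<in>UNIV. addch (y::'a)) = 0" by (simp add: algebra_simps)
    then show ?thesis using x0 by simp
  qed
  finally show ?thesis using False by simp
qed

lemma chi_mult:
  assumes "mult_char chi"
  shows "chi ((x::'a::{finite,field}) * y) = chi x * chi y"
  using assms unfolding mult_char_def by (cases "x = 0 \<or> y = 0") auto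

lemma chi_zero: "mult_char chi \<Longrightarrow> chi 0 = 0" unfolding mult_char_def by simp
lemma chi_one: "mult_char chi \<Longrightarrow> chi 1 = 1" unfolding mult_char_def by simp

lemma chi_power:
  assumes "mult_char chi"
  shows "chi ((x::'a::{finite,field}) ^ n) = chi x ^ n"
  by (induction n) (simp_all add: chi_one[OF assms] chi_mult[OF assms])

lemma chi_pow_d:
  assumes "char_order chi d" "x \<noteq> 0"
  shows "chi x ^ d = 1"
  using assms unfolding char_order_def by simp

lemma chi_norm:
  assumes "char_order chi d" "x \<noteq> 0"
  shows "cmod (chi x) = 1"
proof -
  have d: "d > 0" using assms unfolding char_order_def by simp
  have "cmod (chi x) ^ d = 1" using chi_pow_d[OF assms] by (metis norm_one norm_power)
  then show ?thesis using power_eq_imp_eq_base[of "cmod (chi x)" d 1] d by simp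
qed

lemma chi_nz:
  assumes "char_order chi d" "x \<noteq> 0"
  shows "chi x \<noteq> 0"
  using chi_norm[OF assms] by auto

lemma chi_cnj_mult:
  assumes "char_order chi d" "x \<noteq> 0"
  shows "chi x * cnj (chi x) = 1"
  using chi_norm[OF assms] complex_norm_square[of "chi x"] by (simp add: complex_mult_cnj)

lemma chi_inverse:
  assumes "mult_char chi" "char_order chi d" "(x::'a::{finite,field}) \<noteq> 0"
  shows "chi (inverse x) = cnj (chi x)"
proof -
  have "chi (inverse x) * chi x = 1"
    using chi_mult[OF assms(1), of "inverse x" x] chi_one[OF assms(1)] assms(3) by simp
  hence "chi (inverse x) = chi (inverse x) * (chi x * cnj (chi x))"
    using chi_cnj_mult[OF assms(2,3)] by simp
  also have "\<dots> = cnj (chi x)" using \<open>chi (inverse x) * chi x = 1\<close> by (simp add: mult.assoc[symmetric])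
  finally show ?thesis .
qed

lemma chi_nontriv:
  assumes "char_order chi d" "d > 1"
  shows "\<exists>x::'a::{finite,field}. x \<noteq> 0 \<and> chi x \<noteq> 1"
  using assms unfolding char_order_def by (metis power_one_right zero_less_one)

lemma chi_sum:
  assumes "mult_char chi" "char_order chi d" "d > 1"
  shows "(\<Sum>x\<in>UNIV. chi (x::'a::{finite,field})) = 0"
proof -
  obtain x0 :: 'a where x0: "x0 \<noteq> 0" "chi x0 \<noteq> 1" using chi_nontriv[OF assms(2,3)] by blast
  have "(\<Sum>x\<in>UNIV. chi (x::'a)) = (\<Sum>x\<in>UNIV. chi (x0 * x))"
    by (rule sum.reindex_bij_witness[of _ "\<lambda>y. x0 * y" "\<lambda>y. y / x0"]) (use x0 in auto)
  also have "\<dots> = chi x0 * (\<Sum>x\<in>UNIV. chi (x::'a))"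
    by (simp add: chi_mult[OF assms(1)] sum_distrib_left)
  finally have "(1 - chi x0) * (\<Sum>x\<in>UNIV. chi (x::'a)) = 0" by (simp add: algebra_simps)
  then show ?thesis using x0 by simp
qed

lemma addch_sum_nz:
  assumes "CARD('a::{finite,field}) = CHAR('a) ^ k"
  shows "(\<Sum>y\<in>UNIV-{0}. addch ((s::'a) * y)) = (if s = 0 then of_nat CARD('a) else 0) - 1"
proof -
  have "(\<Sum>y\<in>UNIV. addch (s * y)) = addch (s * 0) + (\<Sum>y\<in>UNIV-{0}. addch ((s::'a) * y))"
    by (rule sum.remove) auto
  then show ?thesis using addch_sum[OF assms, of s] addch_zero[OF assms] by simp
qed

lemma gauss_sum_alt: "gauss_sum chi = (\<Sum>c\<in>UNIV. chi c * addch c)"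
  unfolding gauss_sum_def addch_def ..

lemma gauss_norm_sq:
  fixes chi :: "'a::{finite,field} \<Rightarrow> complex"
  assumes "CARD('a::{finite,field}) = CHAR('a) ^ k"
    and "mult_char chi" "char_order chi d" "d > 1"
  shows "gauss_sum chi * cnj (gauss_sum chi) = of_nat CARD('a)"
proof -
  let ?G = "gauss_sum chi"
  have "?G * cnj ?G = (\<Sum>x\<in>UNIV. chi x * addch x) * (\<Sum>y\<in>UNIV. cnj (chi y) * addch (-y))"
    unfolding gauss_sum_alt by (simp add: addch_neg[OF assms(1)])
  also have "\<dots> = (\<Sum>y\<in>UNIV. \<Sum>x\<in>UNIV. chi x * cnj (chi y) * addch (x - y))"
  proof -
    have "(\<Sum>x\<in>UNIV. chi x * addch x) * (\<Sum>y\<in>UNIV. cnj (chi y) * addch (-y))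
        = (\<Sum>x\<in>UNIV. \<Sum>y\<in>UNIV. chi x * cnj (chi y) * addch (x - y))"
      unfolding sum_product
    proof (intro sum.cong refl)
      fix x y :: 'a
      have "addch (x - y) = addch x * addch (-y)"
        using addch_add[OF assms(1), of x "-y"] by simp
      then show "chi x * addch x * (cnj (chi y) * addch (- y)) = chi x * cnj (chi y) * addch (x - y)"
        by simp
    qed
    also have "\<dots> = (\<Sum>y\<in>UNIV. \<Sum>x\<in>UNIV. chi x * cnj (chi y) * addch (x - y))"
      by (rule sum.swap)
    finally show ?thesis .
  qed
  also have "\<dots> = (\<Sum>y\<in>UNIV-{0}. \<Sum>x\<in>UNIV. chi x * cnj (chi y) * addch (x - y))"
    by (rule sum.mono_neutral_right) (auto simp: chi_zero[OF assms(2)])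
  also have "\<dots> = (\<Sum>y\<in>UNIV-{0}. \<Sum>t\<in>UNIV. chi t * addch ((t - 1) * (y::'a)))"
  proof (rule sum.cong[OF refl])
    fix y :: 'a assume "y \<in> UNIV - {0}"
    hence y: "y \<noteq> 0" by simp
    have "(\<Sum>x\<in>UNIV. chi x * cnj (chi y) * addch (x - y)) = (\<Sum>t\<in>UNIV. chi (t * y) * cnj (chi y) * addch (t * y - y))"
      by (rule sum.reindex_bij_witness[of _ "\<lambda>t. t * y" "\<lambda>x. x / y"]) (use y in auto)
    also have "\<dots> = (\<Sum>t\<in>UNIV. chi t * addch ((t - 1) * y))"
      by (rule sum.cong[OF refl])
         (simp add: chi_mult[OF assms(2)] chi_cnj_mult[OF assms(3) y] algebra_simps)
    finally show "(\<Sum>x\<in>UNIV. chi x * cnj (chi y) * addch (x - y)) = (\<Sum>t\<in>UNIV. chi t * addch ((t - 1) * y))" .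
  qed
  also have "\<dots> = (\<Sum>t\<in>UNIV. chi t * (\<Sum>y\<in>UNIV-{0}. addch ((t - 1) * (y::'a))))"
    by (subst sum.swap) (simp add: sum_distrib_left)
  also have "\<dots> = (\<Sum>t\<in>UNIV. chi t * ((if t = 1 then of_nat CARD('a) else 0) - 1))"
    by (rule sum.cong[OF refl]) (simp add: addch_sum_nz[OF assms(1)])
  also have "\<dots> = (\<Sum>t\<in>UNIV. (if t = 1 then chi t * of_nat CARD('a) else 0) - chi t)"
    by (rule sum.cong[OF refl]) (simp add: right_diff_distrib)
  also have "\<dots> = (\<Sum>t\<in>UNIV. (if t = 1 then chi t * of_nat CARD('a) else 0)) - (\<Sum>t\<in>UNIV. chi t)"
    by (rule sum_subtractf)
  also have "\<dots> = of_nat CARD('a)"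
    using chi_sum[OF assms(2,3,4)] chi_one[OF assms(2)] by simp
  finally show ?thesis .
qed

lemma roots_unity_card:
  assumes "d > 0"
  shows "card {u::'a::{finite,field}. u ^ d = 1} \<le> d"
proof -
  define P :: "'a poly" where "P = monom 1 d - 1"
  have polyP: "poly P x = x ^ d - 1" for x by (simp add: P_def poly_monom)
  have "coeff P d = 1" using assms by (simp add: P_def coeff_monom)
  hence P0: "P \<noteq> 0" by auto
  have "degree P \<le> max (degree (monom (1::'a) d)) (degree (1::'a poly))"
    unfolding P_def by (rule degree_diff_le_max)
  also have "\<dots> \<le> d" using degree_monom_le[of "1::'a" d] by simp
  finally have degP: "degree P \<le> d" .
  have "{u::'a. u ^ d = 1} = {x. poly P x = 0}" by (auto simp: polyP)
  then show ?thesis using card_poly_roots_bound[OF P0] degP by simp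
qed

lemma chi_kernel:
  fixes chi :: "'a::{finite,field} \<Rightarrow> complex"
  assumes mc: "mult_char chi" and co: "char_order chi d" and d1: "d > 1"
    and x: "x \<noteq> 0" "chi x = 1"
  shows "\<exists>z. z \<noteq> 0 \<and> x = z ^ d"
proof -
  define F where "F = UNIV - {0::'a}"
  define P where "P = (\<lambda>z. z ^ d) ` F"
  define K where "K = {y\<in>F. chi y = 1}"
  have finF: "finite F" "finite P" "finite K" unfolding F_def P_def K_def by auto
  have PK: "P \<subseteq> K"
    unfolding P_def K_def F_def using chi_power[OF mc] chi_pow_d[OF co] by auto
  have c1: "card F \<le> card P * d"
  proof -
    have "F \<subseteq> (\<Union>w\<in>P. {z\<in>F. z ^ d = w})" unfolding P_def by auto
    hence "card F \<le> card (\<Union>w\<in>P. {z\<in>F. z ^ d = w})" by (intro card_mono) (auto simp: finF)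
    also have "\<dots> \<le> (\<Sum>w\<in>P. card {z\<in>F. z ^ d = w})" by (rule card_UN_le[OF finF(2)])
    also have "\<dots> \<le> (\<Sum>w\<in>P. d)"
    proof (rule sum_mono)
      fix w assume "w \<in> P"
      then obtain z0 where z0: "z0 \<in> F" "w = z0 ^ d" unfolding P_def by auto
      have z00: "z0 \<noteq> 0" using z0 F_def by auto
      have "card {z\<in>F. z ^ d = w} \<le> card {u::'a. u ^ d = 1}"
      proof (rule card_inj_on_le[of "\<lambda>z. z / z0"])
        show "inj_on (\<lambda>z. z / z0) {z \<in> F. z ^ d = w}" using z00 by (auto simp: inj_on_def)
        show "(\<lambda>z. z / z0) ` {z \<in> F. z ^ d = w} \<subseteq> {u. u ^ d = 1}"
          using z00 z0 by (auto simp: power_divide)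
      qed simp
      also have "\<dots> \<le> d" using roots_unity_card[where 'a='a, of d] d1 by simp
      finally show "card {z\<in>F. z ^ d = w} \<le> d" .
    qed
    finally show ?thesis by simp
  qed
  have c2: "d * card K \<le> card F"
  proof -
    define V where "V = chi ` F"
    have finV: "finite V" unfolding V_def using finF by simp
    have V0: "0 \<notin> V" unfolding V_def F_def using chi_nz[OF co] by fastforce
    have Vpow: "v ^ card V = 1" if v: "v \<in> V" for v
    proof -
      obtain x0 where x0: "x0 \<in> F" "v = chi x0" using v unfolding V_def by auto
      have x00: "x0 \<noteq> 0" using x0 F_def by auto
      have v0: "v \<noteq> 0" using v V0 by auto
      have "(\<Prod>w\<in>V. v * w) = (\<Prod>w\<in>V. w)"
      proof (rule prod.reindex_bij_witness[of _ "\<lambda>w. w / v" "\<lambda>w. v * w"])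
        fix a assume "a \<in> V"
        then obtain y where y: "y \<in> F" "a = chi y" unfolding V_def by auto
        have "v * a = chi (x0 * y)" using chi_mult[OF mc] x0 y by simp
        moreover have "x0 * y \<in> F" using y x00 F_def by auto
        ultimately show "v * a \<in> V" unfolding V_def by auto
        show "v * a / v = a" using v0 by simp
      next
        fix b assume "b \<in> V"
        then obtain y where y: "y \<in> F" "b = chi y" unfolding V_def by auto
        have "chi (y / x0) * chi x0 = chi y" using chi_mult[OF mc, of "y / x0" x0] x00 by simp
        hence "b / v = chi (y / x0)" using x0 y v0 by (simp add: field_simps)
        moreover have "y / x0 \<in> F" using y x00 F_def by auto
        ultimately show "b / v \<in> V" unfolding V_def by auto
        show "v * (b / v) = b" using v0 by simp
      qed simp
      hence "v ^ card V * (\<Prod>w\<in>V. w) = 1 * (\<Prod>w\<in>V. w)" by (simp add: prod.distrib)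
      moreover have "(\<Prod>w\<in>V. w) \<noteq> 0" using V0 finV by simp
      ultimately show ?thesis by (metis mult_cancel_right)
    qed
    have "1 \<in> F" unfolding F_def by simp
    hence Vne: "card V > 0" using finV unfolding V_def by (auto simp: card_gt_0_iff)
    have dV: "d \<le> card V"
    proof (rule ccontr)
      assume "\<not> d \<le> card V"
      then obtain y :: 'a where y: "y \<noteq> 0" "chi y ^ card V \<noteq> 1"
        using co Vne unfolding char_order_def by auto
      have "chi y \<in> V" unfolding V_def F_def using y by auto
      then show False using Vpow y by auto
    qed
    have fib: "card {y\<in>F. chi y = v} = card K" if v: "v \<in> V" for v
    proof -
      obtain x0 where x0: "x0 \<in> F" "v = chi x0" using v unfolding V_def by auto
      have x00: "x0 \<noteq> 0" using x0 F_def by auto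
      have "bij_betw (\<lambda>k. x0 * k) K {y\<in>F. chi y = v}"
      proof (rule bij_betw_byWitness[of _ "\<lambda>y. y / x0"])
        show "\<forall>a\<in>K. x0 * a / x0 = a" using x00 by simp
        show "\<forall>a'\<in>{y \<in> F. chi y = v}. x0 * (a' / x0) = a'" using x00 by simp
        show "(*) x0 ` K \<subseteq> {y \<in> F. chi y = v}"
          using x00 x0 chi_mult[OF mc] unfolding K_def F_def by auto
        show "(\<lambda>y. y / x0) ` {y \<in> F. chi y = v} \<subseteq> K"
        proof
          fix b assume "b \<in> (\<lambda>y. y / x0) ` {y \<in> F. chi y = v}"
          then obtain y where y: "y \<in> F" "chi y = v" "b = y / x0" by auto
          have "chi (y / x0) * chi x0 = chi y" using chi_mult[OF mc, of "y / x0" x0] x00 by simp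
          hence "chi (y / x0) = 1" using y x0 chi_nz[OF co x00] by simp
          then show "b \<in> K" using y x00 unfolding K_def F_def by auto
        qed
      qed
      then show ?thesis by (simp add: bij_betw_same_card)
    qed
    have "F = (\<Union>v\<in>V. {y\<in>F. chi y = v})" unfolding V_def by auto
    hence "card F = card (\<Union>v\<in>V. {y\<in>F. chi y = v})" by simp
    also have "\<dots> = (\<Sum>v\<in>V. card {y\<in>F. chi y = v})"
      by (rule card_UN_disjoint) (use finF finV in auto)
    also have "\<dots> = card V * card K" using fib by simp
    finally have "card F = card V * card K" .
    then show ?thesis using dV by (simp add: mult_right_mono)
  qed
  have "d * card K \<le> d * card P" using c1 c2 by (metis mult.commute le_trans)
  hence "card K \<le> card P" using d1 by simp
  hence "P = K" using card_seteq[OF finF(3) PK] by simp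
  moreover have "x \<in> K" using x unfolding K_def F_def by simp
  ultimately show ?thesis unfolding P_def F_def by auto
qed

lemma clique_card_sq:
  fixes chi :: "'a::{finite,field} \<Rightarrow> complex" and A :: "'a set"
  assumes mc: "mult_char chi" and co: "char_order chi d" and d1: "d > 1"
    and cl: "gp_clique d A"
  shows "card A * card A \<le> CARD('a)"
proof -
  obtain g :: 'a where g: "g \<noteq> 0" "chi g \<noteq> 1" using chi_nontriv[OF co d1] by blast
  have notpow: "g \<noteq> z ^ d" if "z \<noteq> 0" for z
  proof
    assume "g = z ^ d"
    hence "chi g = chi z ^ d" using chi_power[OF mc] by simp
    also have "\<dots> = 1" using chi_pow_d[OF co that] .
    finally show False using g by simp
  qed
  have inj: "inj_on (\<lambda>(a, b). a + g * b) (A \<times> A)"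
  proof (rule inj_onI, clarify)
    fix a b a' b' assume in1: "a \<in> A" "b \<in> A" "a' \<in> A" "b' \<in> A" and eq: "a + g * b = a' + g * b'"
    show "a = a' \<and> b = b'"
    proof (cases "b = b'")
      case True
      then show ?thesis using eq by simp
    next
      case False
      have "a - a' = g * (b' - b)" using eq by (simp add: algebra_simps)
      hence "a \<noteq> a'" using False g by auto
      obtain u where u: "u \<noteq> 0" "a - a' = u ^ d"
        using cl in1 \<open>a \<noteq> a'\<close> unfolding gp_clique_def gp_adj_def by blast
      obtain v where v: "v \<noteq> 0" "b' - b = v ^ d"
        using cl in1 False unfolding gp_clique_def gp_adj_def by metis
      have "g = (u / v) ^ d"
        using \<open>a - a' = g * (b' - b)\<close> u v by (simp add: power_divide field_simps)
      moreover have "u / v \<noteq> 0" using u v by simp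
      ultimately show ?thesis using notpow by blast
    qed
  qed
  have "card (A \<times> A) \<le> CARD('a)"
    by (rule card_inj_on_le[OF inj]) auto
  then show ?thesis by (simp add: card_cartesian_product)
qed

lemma gp_clique_empty: "gp_clique d ({}::'a::{finite,field} set)"
  unfolding gp_clique_def by simp

lemma clique_num_set_finite:
  "finite {card (A :: 'a::{finite,field} set) | A. gp_clique d A}"
proof -
  have "{card (A :: 'a set) | A. gp_clique d A} \<subseteq> {..CARD('a)}"
    by (auto intro: card_mono)
  then show ?thesis using finite_subset by blast
qed

lemma clique_le_num:
  assumes "gp_clique d (A::'a::{finite,field} set)"
  shows "card A \<le> gp_clique_number TYPE('a) d"
  unfolding gp_clique_number_def
  by (rule Max_ge[OF clique_num_set_finite]) (use assms in blast)

lemma clique_num_attained: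
  "\<exists>B::'a::{finite,field} set. gp_clique d B \<and> card B = gp_clique_number TYPE('a) d"
proof -
  have "gp_clique_number TYPE('a) d \<in> {card (A :: 'a set) | A. gp_clique d A}"
    unfolding gp_clique_number_def
    by (rule Max_in[OF clique_num_set_finite]) (use gp_clique_empty in blast)
  then show ?thesis by auto
qed

lemma clique_num_sq:
  fixes chi :: "'a::{finite,field} \<Rightarrow> complex"
  assumes "mult_char chi" "char_order chi d" "d > 1"
  shows "gp_clique_number TYPE('a) d * gp_clique_number TYPE('a) d \<le> CARD('a)"
  using clique_num_attained[where 'a='a, of d] clique_card_sq[OF assms] by metis

lemma chi_twisted:
  fixes chi :: "'a::{finite,field} \<Rightarrow> complex"
  assumes ck: "CARD('a) = CHAR('a) ^ k" and mc: "mult_char chi" and co: "char_order chi d" and d1: "d > 1"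
  shows "(\<Sum>c\<in>UNIV. chi c * addch (t * c)) = (if t = 0 then 0 else chi (inverse t) * gauss_sum chi)"
proof (cases "t = 0")
  case True
  then show ?thesis using chi_sum[OF mc co d1] addch_zero[OF ck] by simp
next
  case False
  have "(\<Sum>c\<in>UNIV. chi c * addch (t * c)) = (\<Sum>u\<in>UNIV. chi (inverse t * u) * addch u)"
    by (rule sum.reindex_bij_witness[of _ "\<lambda>u. inverse t * u" "\<lambda>c. t * c"]) (use False in \<open>auto simp: mult.assoc[symmetric]\<close>)
  also have "\<dots> = chi (inverse t) * gauss_sum chi"
    unfolding gauss_sum_alt by (simp add: chi_mult[OF mc] sum_distrib_left mult.assoc)
  finally show ?thesis using False by simp
qed

lemma S_norm_sq:
  assumes ck: "CARD('a::{finite,field}) = CHAR('a) ^ k"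
  shows "complex_of_real ((cmod (\<Sum>a\<in>A. addch (a * c)))\<^sup>2)
       = (\<Sum>a\<in>A. \<Sum>b\<in>A. addch ((a - b) * (c::'a)))"
proof -
  have "complex_of_real ((cmod (\<Sum>a\<in>A. addch (a * c)))\<^sup>2)
      = (\<Sum>a\<in>A. addch (a * c)) * cnj (\<Sum>a\<in>A. addch (a * c))"
    by (rule complex_norm_square)
  also have "\<dots> = (\<Sum>a\<in>A. \<Sum>b\<in>A. addch (a * c) * cnj (addch (b * c)))"
    by (simp add: cnj_sum sum_product)
  also have "\<dots> = (\<Sum>a\<in>A. \<Sum>b\<in>A. addch ((a - b) * (c::'a)))"
    by (intro sum.cong refl)
       (simp add: addch_neg[OF ck, symmetric] addch_add[OF ck, symmetric] algebra_simps)
  finally show ?thesis .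
qed

lemma re_eq_norm: "Re z = cmod z \<Longrightarrow> z = complex_of_real (cmod z)"
proof -
  assume h: "Re z = cmod z"
  have "(cmod z)\<^sup>2 = (Re z)\<^sup>2 + (Im z)\<^sup>2" by (rule cmod_power2)
  hence "Im z = 0" using h by simp
  then show ?thesis using h by (simp add: complex_eq_iff)
qed

lemma parseval_S:
  assumes ck: "CARD('a::{finite,field}) = CHAR('a) ^ k"
  shows "(\<Sum>c\<in>UNIV-{0}. (cmod (\<Sum>a\<in>A. addch (a * (c::'a))))\<^sup>2)
       = real CARD('a) * real (card A) - real (card A) * real (card A)"
proof -
  have "complex_of_real (\<Sum>c\<in>UNIV-{0}. (cmod (\<Sum>a\<in>A. addch (a * (c::'a))))\<^sup>2)
      = (\<Sum>c\<in>UNIV-{0}. \<Sum>a\<in>A. \<Sum>b\<in>A. addch ((a - b) * (c::'a)))"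
    by (simp only: of_real_sum S_norm_sq[OF ck])
  also have "\<dots> = (\<Sum>a\<in>A. \<Sum>b\<in>A. \<Sum>c\<in>UNIV-{0}. addch ((a - b) * (c::'a)))"
    by (subst sum.swap) (rule sum.cong[OF refl], rule sum.swap)
  also have "\<dots> = (\<Sum>a\<in>A. \<Sum>b\<in>A. (if b = a then of_nat CARD('a) else 0) - 1)"
    by (intro sum.cong refl) (simp add: addch_sum_nz[OF ck])
  also have "\<dots> = (\<Sum>a\<in>A. of_nat CARD('a) - of_nat (card A))"
    by (intro sum.cong refl) (simp add: sum_subtractf)
  also have "\<dots> = complex_of_real (real CARD('a) * real (card A) - real (card A) * real (card A))"
    by (simp add: algebra_simps)
  finally show ?thesis using of_real_eq_iff by blast
qed

lemma twisted_total:
  fixes chi :: "'a::{finite,field} \<Rightarrow> complex"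
  assumes ck: "CARD('a) = CHAR('a) ^ k" and mc: "mult_char chi" and co: "char_order chi d" and d1: "d > 1"
  shows "(\<Sum>c\<in>UNIV. chi c * complex_of_real ((cmod (\<Sum>a\<in>A. addch (a * c)))\<^sup>2))
       = gauss_sum chi * (\<Sum>a\<in>A. \<Sum>b\<in>A. if a = b then 0 else chi (inverse (a - b)))"
proof -
  have "(\<Sum>c\<in>UNIV. chi c * complex_of_real ((cmod (\<Sum>a\<in>A. addch (a * c)))\<^sup>2))
      = (\<Sum>c\<in>UNIV. \<Sum>a\<in>A. \<Sum>b\<in>A. chi c * addch ((a - b) * c))"
    unfolding S_norm_sq[OF ck] by (simp add: sum_distrib_left)
  also have "\<dots> = (\<Sum>a\<in>A. \<Sum>b\<in>A. \<Sum>c\<in>UNIV. chi c * addch ((a - b) * c))"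
    by (subst sum.swap) (rule sum.cong[OF refl], rule sum.swap)
  also have "\<dots> = (\<Sum>a\<in>A. \<Sum>b\<in>A. gauss_sum chi * (if a = b then 0 else chi (inverse (a - b))))"
  proof (intro sum.cong refl)
    fix a b assume "a \<in> A" "b \<in> A"
    show "(\<Sum>c\<in>UNIV. chi c * addch ((a - b) * c)) = gauss_sum chi * (if a = b then 0 else chi (inverse (a - b)))"
      unfolding chi_twisted[OF ck mc co d1, of "a - b"] by (simp add: ac_simps)
  qed
  also have "\<dots> = gauss_sum chi * (\<Sum>a\<in>A. \<Sum>b\<in>A. if a = b then 0 else chi (inverse (a - b)))"
    by (simp add: sum_distrib_left)
  finally show ?thesis .
qed

lemma nested_nonneg_zero:
  fixes f :: "'b \<Rightarrow> 'b \<Rightarrow> real"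
  assumes "finite A" "\<And>a b. a \<in> A \<Longrightarrow> b \<in> A \<Longrightarrow> f a b \<ge> 0"
    and "(\<Sum>a\<in>A. \<Sum>b\<in>A. f a b) = 0" and "a \<in> A" "b \<in> A"
  shows "f a b = 0"
proof -
  have "\<forall>a\<in>A. (\<Sum>b\<in>A. f a b) = 0"
    using sum_nonneg_eq_0_iff[OF assms(1), of "\<lambda>a. \<Sum>b\<in>A. f a b"] assms(2,3)
    by (simp add: sum_nonneg)
  hence "(\<Sum>b\<in>A. f a b) = 0" using assms(4) by blast
  then show ?thesis using sum_nonneg_eq_0_iff[OF assms(1), of "f a"] assms(2,4,5) by simp
qed

lemma part1:
  fixes chi :: "'a::{finite,field} \<Rightarrow> complex" and A :: "'a set"
  assumes ck: "CARD('a) = CHAR('a) ^ k" and mc: "mult_char chi" and co: "char_order chi d"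
    and d1: "d > 1" and hA: "real (card A) = sqrt (real CARD('a))"
  shows "gp_max_clique d A \<longleftrightarrow>
    (\<forall>c. c \<noteq> 0 \<longrightarrow> same_arg (chi c * complex_of_real ((cmod (\<Sum>a\<in>A. addch (a * c)))\<^sup>2)) (gauss_sum chi))"
proof -
  define n where "n = card A"
  define q where "q = CARD('a)"
  define G where "G = gauss_sum chi"
  define S where "S = (\<lambda>c. \<Sum>a\<in>A. addch (a * c))"
  define W where "W = (\<lambda>c. chi c * complex_of_real ((cmod (S c))\<^sup>2))"
  define X where "X = (\<Sum>a\<in>A. \<Sum>b\<in>A. if a = b then 0 else chi (inverse (a - b)))"
  have finA: "finite A" by simp
  have qn: "real q = real n * real n"
    using hA unfolding n_def q_def by (metis of_nat_0_le_iff real_sqrt_pow2 power2_eq_square)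
  have qnn: "q = n * n" using qn by (simp only: of_nat_mult[symmetric] of_nat_eq_iff)
  have q2: "q \<ge> 2" unfolding q_def by (rule ff_card_ge2)
  have npos: "real n > 0" using qn q2 by (metis mult_eq_0_iff of_nat_0_less_iff not_gr0 of_nat_0 rel_simps(76) zero_less_numeral less_le_trans)
  have GG: "G * cnj G = of_nat q" unfolding G_def q_def by (rule gauss_norm_sq[OF ck mc co d1])
  have normG: "cmod G = real n"
  proof -
    have "complex_of_real ((cmod G)\<^sup>2) = complex_of_real (real q)" using GG complex_norm_square[of G] by simp
    hence "(cmod G)\<^sup>2 = real q" by (simp only: of_real_eq_iff)
    hence "(cmod G)\<^sup>2 = (real n)\<^sup>2" using qn by (simp add: power2_eq_square)
    then show ?thesis using power2_eq_imp_eq by fastforce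
  qed
  have G0: "G \<noteq> 0" using normG npos by auto
  have PS: "(\<Sum>c\<in>UNIV-{0}. (cmod (S c))\<^sup>2) = real q * real n - real n * real n"
    unfolding S_def q_def n_def by (rule parseval_S[OF ck])
  have TW: "(\<Sum>c\<in>UNIV-{0}. W c) = G * X"
  proof -
    have "(\<Sum>c\<in>UNIV. W c) = W 0 + (\<Sum>c\<in>UNIV-{0}. W c)" by (rule sum.remove) auto
    moreover have "W 0 = 0" unfolding W_def using chi_zero[OF mc] by simp
    moreover have "(\<Sum>c\<in>UNIV. W c) = G * X"
      unfolding W_def S_def G_def X_def by (rule twisted_total[OF ck mc co d1])
    ultimately show ?thesis by simp
  qed
  have normW: "cmod (W c) = (cmod (S c))\<^sup>2" if "c \<noteq> 0" for c
    unfolding W_def using chi_norm[OF co that] by (simp add: norm_mult norm_power)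
  have goal_eq: "(\<forall>c. c \<noteq> 0 \<longrightarrow> same_arg (W c) G) \<longleftrightarrow> gp_max_clique d A"
  proof
    assume H: "\<forall>c. c \<noteq> 0 \<longrightarrow> same_arg (W c) G"
    have Wr: "W c = complex_of_real ((cmod (S c))\<^sup>2 / real n) * G" if c: "c \<noteq> 0" for c
    proof -
      have "W c = 0 \<or> (\<exists>r>0. W c = complex_of_real r * G)" using H c G0 unfolding same_arg_def by auto
      then show ?thesis
      proof
        assume "W c = 0"
        hence "(cmod (S c))\<^sup>2 = 0" using normW[OF c] by simp
        then show ?thesis using \<open>W c = 0\<close> by simp
      next
        assume "\<exists>r>0. W c = complex_of_real r * G"
        then obtain r where r: "r > 0" "W c = complex_of_real r * G" by blast
        hence "cmod (W c) = r * real n" using normG by (simp add: norm_mult)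
        hence "r = (cmod (S c))\<^sup>2 / real n" using normW[OF c] npos by (simp add: field_simps)
        then show ?thesis using r by simp
      qed
    qed
    have SW0: "(\<Sum>c\<in>UNIV-{0}. W c) = complex_of_real ((\<Sum>c\<in>UNIV-{0}. (cmod (S c))\<^sup>2) / real n) * G"
      by (simp add: Wr sum_distrib_right sum_divide_distrib)
    have PSn: "(\<Sum>c\<in>UNIV-{0}. (cmod (S c))\<^sup>2) / real n = real n * real n - real n"
      using PS qn npos by (simp add: field_simps)
    have SW: "(\<Sum>c\<in>UNIV-{0}. W c) = complex_of_real (real n * real n - real n) * G"
      using SW0 by (simp only: PSn)
    have "G * X = G * complex_of_real (real n * real n - real n)"
      using SW TW by (simp only: mult.commute)
    hence "X = complex_of_real (real n * real n - real n)" using G0 by (metis mult_left_cancel)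
    hence ReX: "Re X = real n * real n - real n" by simp
    define Y where "Y = (\<lambda>a b. if a = b then 0 else 1 - Re (chi (inverse (a - b))))"
    have Y0: "Y a b \<ge> 0" if "a \<in> A" "b \<in> A" for a b
    proof (cases "a = b")
      case False
      hence "cmod (chi (inverse (a - b))) = 1" using chi_norm[OF co] by simp
      then show ?thesis unfolding Y_def using False complex_Re_le_cmod[of "chi (inverse (a - b))"] by simp
    qed (simp add: Y_def)
    have inner: "(\<Sum>b\<in>A. if a = b then 0 else (1::real)) = real n - 1" if "a \<in> A" for a
    proof -
      have "(\<Sum>b\<in>A. if a = b then 0 else (1::real)) = (\<Sum>b\<in>A. 1 - (if a = b then 1 else 0))"
        by (intro sum.cong refl) auto
      also have "\<dots> = real n - 1" using that finA by (simp add: sum_subtractf n_def)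
      finally show ?thesis .
    qed
    have "(\<Sum>a\<in>A. \<Sum>b\<in>A. Y a b) = (\<Sum>a\<in>A. \<Sum>b\<in>A. if a = b then 0 else (1::real)) - Re X"
      unfolding Y_def X_def Re_sum by (simp add: sum_subtractf[symmetric] if_distrib cong: if_cong)
    also have "(\<Sum>a\<in>A. \<Sum>b\<in>A. if a = b then 0 else (1::real)) = (\<Sum>a\<in>A. real n - 1)"
      by (rule sum.cong[OF refl]) (rule inner)
    also have "(\<Sum>a\<in>A. real n - 1) - Re X = 0" using ReX by (simp add: n_def algebra_simps)
    finally have Ysum: "(\<Sum>a\<in>A. \<Sum>b\<in>A. Y a b) = 0" .
    have cl: "gp_clique d A" unfolding gp_clique_def
    proof (intro ballI impI)
      fix a b assume ab: "a \<in> A" "b \<in> A" "a \<noteq> b"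
      have "Y a b = 0" by (rule nested_nonneg_zero[OF finA _ Ysum ab(1,2)]) (rule Y0)
      hence re1: "Re (chi (inverse (a - b))) = 1" using ab unfolding Y_def by simp
      have iz: "inverse (a - b) \<noteq> 0" using ab by simp
      have "cmod (chi (inverse (a - b))) = 1" using chi_norm[OF co iz] .
      hence "chi (inverse (a - b)) = 1" using re_eq_norm[of "chi (inverse (a - b))"] re1 by simp
      then obtain z where z: "z \<noteq> 0" "inverse (a - b) = z ^ d" using chi_kernel[OF mc co d1 iz] by blast
      hence "a - b = inverse z ^ d" by (metis inverse_inverse_eq power_inverse)
      moreover have "inverse z \<noteq> 0" using z by simp
      ultimately show "gp_adj d a b" unfolding gp_adj_def using ab by blast
    qed
    have "card A \<le> gp_clique_number TYPE('a) d" by (rule clique_le_num[OF cl])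
    moreover have "gp_clique_number TYPE('a) d * gp_clique_number TYPE('a) d \<le> n * n"
      using clique_num_sq[OF mc co d1] qnn unfolding q_def by simp
    hence "gp_clique_number TYPE('a) d \<le> n"
    proof (rule contrapos_pp)
      assume "\<not> gp_clique_number TYPE('a) d \<le> n"
      hence "n < gp_clique_number TYPE('a) d" by simp
      hence "n * n < gp_clique_number TYPE('a) d * gp_clique_number TYPE('a) d"
        by (intro mult_strict_mono) auto
      then show "\<not> gp_clique_number TYPE('a) d * gp_clique_number TYPE('a) d \<le> n * n" by simp
    qed
    ultimately show "gp_max_clique d A" unfolding gp_max_clique_def using cl n_def by simp
  next
    assume "gp_max_clique d A"
    hence cl: "gp_clique d A" unfolding gp_max_clique_def by simp
    have chi1: "chi (inverse (a - b)) = 1" if "a \<in> A" "b \<in> A" "a \<noteq> b" for a b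
    proof -
      have "gp_adj d a b" using cl that unfolding gp_clique_def by blast
      then obtain z where z: "z \<noteq> 0" "a - b = z ^ d" unfolding gp_adj_def by blast
      have "inverse (a - b) = inverse z ^ d" unfolding z(2) by (simp only: power_inverse)
      hence "chi (inverse (a - b)) = chi (inverse z) ^ d" by (simp only: chi_power[OF mc])
      also have "\<dots> = 1" using chi_pow_d[OF co, of "inverse z"] z by simp
      finally show ?thesis .
    qed
    have "X = (\<Sum>a\<in>A. \<Sum>b\<in>A. 1 - (if a = b then 1 else 0))"
      unfolding X_def by (intro sum.cong refl) (auto simp: chi1)
    also have "\<dots> = (\<Sum>a\<in>A. of_nat n - 1)"
      by (intro sum.cong refl) (simp add: sum_subtractf n_def)
    finally have Xv: "X = of_nat n * (of_nat n - 1)" by (simp add: n_def)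
    define f where "f = (\<lambda>c. real n * (cmod (S c))\<^sup>2 - Re (cnj G * W c))"
    have f0: "f c \<ge> 0" if "c \<in> UNIV - {0}" for c
    proof -
      have "Re (cnj G * W c) \<le> cmod (cnj G * W c)" by (rule complex_Re_le_cmod)
      also have "\<dots> = real n * (cmod (S c))\<^sup>2" using normG normW[of c] that by (simp add: norm_mult)
      finally show ?thesis unfolding f_def by simp
    qed
    have "(\<Sum>c\<in>UNIV-{0}. f c) = real n * (\<Sum>c\<in>UNIV-{0}. (cmod (S c))\<^sup>2) - Re (cnj G * (\<Sum>c\<in>UNIV-{0}. W c))"
      unfolding f_def by (simp add: sum_subtractf sum_distrib_left Re_sum)
    also have "\<dots> = real n * (real q * real n - real n * real n) - Re (cnj G * G * X)"
      using PS TW by (simp add: mult.assoc)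
    also have "cnj G * G * X = of_nat q * (of_nat n * (of_nat n - 1))" using GG Xv by (simp add: mult.commute)
    also have "real n * (real q * real n - real n * real n) - Re (of_nat q * (of_nat n * (of_nat n - 1))) = 0"
      using qn by (simp add: algebra_simps)
    finally have fsum: "(\<Sum>c\<in>UNIV-{0}. f c) = 0" .
    show "\<forall>c. c \<noteq> 0 \<longrightarrow> same_arg (W c) G"
    proof (intro allI impI)
      fix c :: 'a assume c: "c \<noteq> 0"
      have "f c = 0" using sum_nonneg_eq_0_iff[of "UNIV-{0}" f] f0 fsum c by auto
      hence "Re (cnj G * W c) = cmod (cnj G * W c)"
        unfolding f_def using normG normW[OF c] by (simp add: norm_mult)
      hence e0: "cnj G * W c = complex_of_real (cmod (cnj G * W c))" by (rule re_eq_norm)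
      define m where "m = cmod (cnj G * W c)"
      have e: "cnj G * W c = complex_of_real m" using e0 unfolding m_def .
      define r where "r = m / real q"
      have "G * (cnj G * W c) = of_nat q * W c" using GG by (metis mult.assoc)
      hence "of_nat q * W c = G * complex_of_real m" using e by simp
      hence Wc: "W c = complex_of_real r * G" unfolding r_def using q2 by (simp add: field_simps)
      show "same_arg (W c) G"
      proof (cases "r = 0")
        case True
        then show ?thesis unfolding same_arg_def using Wc by simp
      next
        case False
        hence "r > 0" unfolding r_def m_def using q2 by simp
        then show ?thesis unfolding same_arg_def using Wc by blast
      qed
    qed
  qed
  show ?thesis using goal_eq unfolding W_def S_def G_def by simp
qed

lemma same_arg_recover:
  assumes "same_arg (u * complex_of_real s) w" "cmod u = 1" "s > 0" "w \<noteq> 0"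
  shows "w = u * complex_of_real (cmod w)"
proof -
  have us0: "u * complex_of_real s \<noteq> 0" using assms(2,3) by auto
  then obtain r where r: "r > 0" "u * complex_of_real s = complex_of_real r * w"
    using assms(1,4) unfolding same_arg_def by blast
  have "cmod (u * complex_of_real s) = r * cmod w" using r by (simp add: norm_mult)
  hence sr: "s = r * cmod w" using assms(2,3) by (simp add: norm_mult)
  have "w = u * complex_of_real s / complex_of_real r" using r by (simp add: field_simps)
  also have "\<dots> = u * complex_of_real (cmod w)" using sr r by (simp add: field_simps)
  finally show ?thesis .
qed

lemma gauss_cmod:
  fixes chi :: "'a::{finite,field} \<Rightarrow> complex"
  assumes ck: "CARD('a) = CHAR('a) ^ k" and mc: "mult_char chi" and co: "char_order chi d" and d1: "d > 1"
  shows "cmod (gauss_sum chi) = sqrt (real CARD('a))"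
proof -
  have "complex_of_real ((cmod (gauss_sum chi))\<^sup>2) = complex_of_real (real CARD('a))"
    using gauss_norm_sq[OF ck mc co d1] complex_norm_square[of "gauss_sum chi"] by simp
  hence "(cmod (gauss_sum chi))\<^sup>2 = real CARD('a)" by (simp only: of_real_eq_iff)
  then show ?thesis by (metis norm_ge_zero real_sqrt_unique)
qed

theorem theorem1p9:
  fixes chi :: "'a::{finite,field} \<Rightarrow> complex"
    and A :: "'a set" and p d m :: nat
  assumes "prime p" and "odd p" and "CHAR('a) = p"
    and "CARD('a) = p ^ (2 * m)"
    and "d > 1" and "CARD('a) mod (2 * d) = 1"
    and "mult_char chi" and "char_order chi d"
    and "real (card A) = sqrt (real CARD('a))"
  defines "S \<equiv> (\<lambda>c. \<Sum>a\<in>A. e_p (abs_trace (a * c)))"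
  shows "(gp_max_clique d A \<longleftrightarrow>
           (\<forall>c. c \<noteq> 0 \<longrightarrow> same_arg (chi c * complex_of_real ((cmod (S c))\<^sup>2)) (gauss_sum chi)))
       \<and> (real (gp_clique_number TYPE('a) d) = sqrt (real CARD('a)) \<longrightarrow>
           norm_gauss_sum chi ^ d = 1
         \<and> gauss_sum chi = norm_gauss_sum chi * complex_of_real (sqrt (real CARD('a)))
         \<and> pure (gauss_sum chi)
         \<and> (gp_max_clique d A \<longrightarrow>
              (\<forall>c. c \<noteq> 0 \<and> chi c \<noteq> norm_gauss_sum chi \<longrightarrow> S c = 0)))"
proof -
  have ck: "CARD('a) = CHAR('a) ^ (2 * m)" using assms(3,4) by simp
  note mc = assms(7) and co = assms(8) and d1 = assms(5)
  have Seq: "S = (\<lambda>c. \<Sum>a\<in>A. addch (a * c))" unfolding S_def addch_def ..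
  define G where "G = gauss_sum chi"
  define sq where "sq = sqrt (real CARD('a))"
  have sq0: "sq > 0" unfolding sq_def using ff_card_ge2[where 'a='a] by simp
  have normG: "cmod G = sq" unfolding G_def sq_def by (rule gauss_cmod[OF ck mc co d1])
  have G0: "G \<noteq> 0" using normG sq0 by auto
  have P1: "gp_max_clique d A \<longleftrightarrow>
      (\<forall>c. c \<noteq> 0 \<longrightarrow> same_arg (chi c * complex_of_real ((cmod (S c))\<^sup>2)) (gauss_sum chi))"
    unfolding Seq by (rule part1[OF ck mc co d1 assms(9)])
  have P2: "norm_gauss_sum chi ^ d = 1
         \<and> gauss_sum chi = norm_gauss_sum chi * complex_of_real (sqrt (real CARD('a)))
         \<and> pure (gauss_sum chi)
         \<and> (gp_max_clique d A \<longrightarrow>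
              (\<forall>c. c \<noteq> 0 \<and> chi c \<noteq> norm_gauss_sum chi \<longrightarrow> S c = 0))"
    if hw: "real (gp_clique_number TYPE('a) d) = sqrt (real CARD('a))"
  proof -
    obtain B :: "'a set" where B: "gp_clique d B" "card B = gp_clique_number TYPE('a) d"
      using clique_num_attained by blast
    have Bmax: "gp_max_clique d B" unfolding gp_max_clique_def using B by simp
    have hB: "real (card B) = sqrt (real CARD('a))" using B(2) hw by simp
    define SB where "SB = (\<lambda>c. \<Sum>a\<in>B. addch (a * c))"
    have P1B: "\<forall>c. c \<noteq> 0 \<longrightarrow> same_arg (chi c * complex_of_real ((cmod (SB c))\<^sup>2)) G"
      using part1[OF ck mc co d1 hB] Bmax unfolding SB_def G_def by blast
    define n where "n = card B"
    have qn: "real CARD('a) = real n * real n"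
      using hB unfolding n_def by (metis of_nat_0_le_iff real_sqrt_pow2 power2_eq_square)
    have n2: "n \<ge> 2"
    proof (rule ccontr)
      assume "\<not> n \<ge> 2"
      hence "n \<le> 1" by simp
      hence "n * n \<le> 1" using mult_le_one by blast
      hence "real n * real n \<le> 1" by (metis of_nat_le_iff of_nat_mult of_nat_1)
      then show False using qn ff_card_ge2[where 'a='a] by simp
    qed
    have PS: "(\<Sum>c\<in>UNIV-{0}. (cmod (SB c))\<^sup>2) = real CARD('a) * real n - real n * real n"
      unfolding SB_def n_def by (rule parseval_S[OF ck])
    have "real n * real n * (real n - 1) > 0" using n2 by simp
    hence PSpos: "(\<Sum>c\<in>UNIV-{0}. (cmod (SB c))\<^sup>2) \<noteq> 0" using PS qn by (simp add: algebra_simps)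
    obtain c0 :: 'a where c0: "c0 \<noteq> 0" "(cmod (SB c0))\<^sup>2 \<noteq> 0"
    proof (rule ccontr)
      assume "\<not> thesis"
      hence "\<forall>c\<in>UNIV-{0}. (cmod (SB c))\<^sup>2 = 0" using that by blast
      hence "(\<Sum>c\<in>UNIV-{0}. (cmod (SB c))\<^sup>2) = 0" by simp
      then show False using PSpos by simp
    qed
    have spos: "(cmod (SB c0))\<^sup>2 > 0" using c0(2) by simp
    have Gform: "G = chi c0 * complex_of_real sq"
      using same_arg_recover[OF P1B[rule_format, OF c0(1)] chi_norm[OF co c0(1)] spos G0] normG by simp
    have eps: "norm_gauss_sum chi = chi c0"
      unfolding norm_gauss_sum_def G_def[symmetric] sq_def[symmetric] Gform using sq0 by simp
    show ?thesis
    proof (intro conjI impI allI)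
      show "norm_gauss_sum chi ^ d = 1" unfolding eps by (rule chi_pow_d[OF co c0(1)])
      show "gauss_sum chi = norm_gauss_sum chi * complex_of_real (sqrt (real CARD('a)))"
        unfolding eps G_def[symmetric] sq_def[symmetric] by (rule Gform)
      show "pure (gauss_sum chi)" unfolding pure_def
      proof (intro exI conjI)
        show "int d \<noteq> 0" using d1 by simp
        have "gauss_sum chi powi int d = (chi c0 * complex_of_real sq) ^ d"
          unfolding G_def[symmetric] Gform by simp
        also have "\<dots> = complex_of_real (sq ^ d)"
          by (simp add: power_mult_distrib chi_pow_d[OF co c0(1)])
        finally show "gauss_sum chi powi int d \<in> \<real>" by simp
      qed
    next
      fix c :: 'a
      assume Amax: "gp_max_clique d A" and cc: "c \<noteq> 0 \<and> chi c \<noteq> norm_gauss_sum chi"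
      show "S c = 0"
      proof (rule ccontr)
        assume Sc: "S c \<noteq> 0"
        have sa: "same_arg (chi c * complex_of_real ((cmod (S c))\<^sup>2)) G"
          using P1 Amax cc unfolding G_def by blast
        have "G = chi c * complex_of_real (cmod G)"
          by (rule same_arg_recover[OF sa chi_norm[OF co] _ G0]) (use cc Sc in auto)
        hence "chi c = chi c0" using Gform normG sq0 by auto
        then show False using cc eps by simp
      qed
    qed
  qed
  show ?thesis using P1 P2 by blast
qed

end
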